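(* On the round sphere $\mathbb{S}^3$, let $\Phi=[\tilde u,1]$ (a Killing spinor with $\nabla_X\Phi=\tfrac12X\cdot\Phi$), let $V$ be a vector field and $\alpha$ a smooth function, and set $\Psi:=V\cdot\Phi+\alpha\Phi$. Then $\Psi$ is a generalized Killing spinor of unit length if and only if (i) $\alpha^2+|V|^2=1$, (ii) $-V\lrcorner\ast\nabla_VV-V(\alpha)\,V+\alpha\nabla_VV+d\alpha=0$, (iii) $\alpha\ast(V\wedge dV)+(2\alpha-\delta V)(1-\alpha^2)+\alpha V(\alpha)=0$.
   Context: $\mathbb{S}^3\subset\mathbb{H}$ is the unit sphere with round metric, $u(g)=(gi,gj,gk)$ the left-invariant orthonormal frame defining the orientation, $\tilde u$ its lift to the spin bundle, and spinors are written $[\tilde u,f]$ with $f:\mathbb{S}^3\to\mathbb{H}$, Clifford multiplication by $gx$ acting as $f\mapsto xf$. With this convention $X\cdot Y\cdot Z\cdot\Psi=-\Psi$ for any positive orthonormal basis $(X,Y,Z)$, and $\ast X\cdot\Psi=X\cdot\Psi$. Every spinor can be uniquely written as $V\cdot\Phi+\alpha\Phi$. Vectors and $1$-forms are identified via the metric; $\ast$ is the Hodge star, $\delta$ the codifferential (so $\delta V=-\mathrm{div}V$), $dV$ the exterior derivative of the $1$-form dual to $V$, $\lrcorner$ the interior product. A generalized Killing spinor is $\Psi$ with $\nabla_X\Psi=A(X)\cdot\Psi$ for all $X$ for some symmetric endomorphism field $A$. *)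

theory Defs
  imports "HOL-Analysis.Analysis"
begin

section \<open>Quaternions H = R x R^3 (real part, imaginary part)\<close>

type_synonym quat = "real \<times> (real^3)"

definition qmul :: "quat \<Rightarrow> quat \<Rightarrow> quat" where
  "qmul p q = (fst p * fst q - snd p \<bullet> snd q,
               fst p *\<^sub>R snd q + fst q *\<^sub>R snd p + cross3 (snd p) (snd q))"

definition qconj :: "quat \<Rightarrow> quat" where
  "qconj p = (fst p, - snd p)"

definition qone :: quat where "qone = (1, 0)"

definition qof_real :: "real \<Rightarrow> quat" where "qof_real r = (r, 0)"

definition qi :: quat where "qi = (0, axis 1 1)"
definition qj :: quat where "qj = (0, axis 2 1)"
definition qk :: quat where "qk = (0, axis 3 1)"

definition S3 :: "quat set" where "S3 = sphere 0 1"

fun iter_deriv :: "('a::real_normed_vector \<Rightarrow> 'b::real_normed_vector) \<Rightarrow> 'a list \<Rightarrow> 'a \<Rightarrow> 'b" where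
  "iter_deriv F [] = F"
| "iter_deriv F (w # ws) = (\<lambda>x. frechet_derivative (iter_deriv F ws) (at x) w)"

definition smooth_fun :: "('a::real_normed_vector \<Rightarrow> 'b::real_normed_vector) \<Rightarrow> bool" where
  "smooth_fun F \<longleftrightarrow> (\<forall>ws x. iter_deriv F ws differentiable (at x))"

definition tangent :: "quat \<Rightarrow> quat \<Rightarrow> bool" where
  "tangent g X \<longleftrightarrow> X \<bullet> g = 0"

definition dderiv :: "(quat \<Rightarrow> 'b::real_normed_vector) \<Rightarrow> quat \<Rightarrow> quat \<Rightarrow> 'b" where
  "dderiv F g X = frechet_derivative F (at g) X"

definition tproj :: "quat \<Rightarrow> quat \<Rightarrow> quat" where
  "tproj g Z = Z - (Z \<bullet> g) *\<^sub>R g"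

text \<open>Levi-Civita connection of the round metric: nabla_X Y at g\<close>
definition lc_nabla :: "(quat \<Rightarrow> quat) \<Rightarrow> quat \<Rightarrow> quat \<Rightarrow> quat" where
  "lc_nabla Y g X = tproj g (dderiv Y g X)"

text \<open>imaginary units i, j, k indexed 0,1,2; left-invariant frame u(g) = (gi, gj, gk)\<close>
definition eps :: "nat \<Rightarrow> quat" where
  "eps a = (if a = 0 then qi else if a = 1 then qj else qk)"

definition Efr :: "nat \<Rightarrow> quat \<Rightarrow> quat" where
  "Efr a g = qmul g (eps a)"

text \<open>Riemannian volume form for the orientation given by the frame u\<close>
definition vol :: "quat \<Rightarrow> quat \<Rightarrow> quat \<Rightarrow> quat \<Rightarrow> real" where
  "vol g X Y Z = cross3 (snd (qmul (qconj g) X)) (snd (qmul (qconj g) Y)) \<bullet> snd (qmul (qconj g) Z)"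

definition vderiv :: "(quat \<Rightarrow> quat) \<Rightarrow> (quat \<Rightarrow> real) \<Rightarrow> quat \<Rightarrow> real" where
  "vderiv V f g = dderiv f g (V g)"

text \<open>d alpha, identified with a vector via the metric (gradient on S^3)\<close>
definition dfun :: "(quat \<Rightarrow> real) \<Rightarrow> quat \<Rightarrow> quat" where
  "dfun f g = (\<Sum>a<3. dderiv f g (Efr a g) *\<^sub>R Efr a g)"

text \<open>exterior derivative of the 1-form dual to V: a 2-form at g\<close>
definition dvf :: "(quat \<Rightarrow> quat) \<Rightarrow> quat \<Rightarrow> quat \<Rightarrow> quat \<Rightarrow> real" where
  "dvf V g X Y = lc_nabla V g X \<bullet> Y - lc_nabla V g Y \<bullet> X"

text \<open>codifferential delta V = - div V\<close>
definition codiff :: "(quat \<Rightarrow> quat) \<Rightarrow> quat \<Rightarrow> real" where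
  "codiff V g = - (\<Sum>a<3. lc_nabla V g (Efr a g) \<bullet> Efr a g)"

text \<open>Hodge star of a 1-form W (identified with vector) at g: a 2-form\<close>
definition hodge1 :: "quat \<Rightarrow> quat \<Rightarrow> quat \<Rightarrow> quat \<Rightarrow> real" where
  "hodge1 g W X Y = vol g W X Y"

definition hodge3 :: "quat \<Rightarrow> (quat \<Rightarrow> quat \<Rightarrow> quat \<Rightarrow> real) \<Rightarrow> real" where
  "hodge3 g \<gamma> = \<gamma> (Efr 0 g) (Efr 1 g) (Efr 2 g)"

definition wedge12 :: "quat \<Rightarrow> (quat \<Rightarrow> quat \<Rightarrow> real) \<Rightarrow> quat \<Rightarrow> quat \<Rightarrow> quat \<Rightarrow> real" where
  "wedge12 \<theta> \<beta> X Y Z = (\<theta> \<bullet> X) * \<beta> Y Z - (\<theta> \<bullet> Y) * \<beta> X Z + (\<theta> \<bullet> Z) * \<beta> X Y"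

text \<open>interior product of a vector with a 2-form at g, a 1-form identified with a vector\<close>
definition interior2 :: "quat \<Rightarrow> quat \<Rightarrow> (quat \<Rightarrow> quat \<Rightarrow> real) \<Rightarrow> quat" where
  "interior2 g Z \<beta> = (\<Sum>a<3. \<beta> Z (Efr a g) *\<^sub>R Efr a g)"

section \<open>Spinors [u~, f], represented by f : S^3 -> H\<close>

text \<open>Clifford multiplication by a tangent vector X = g x: f |-> x f\<close>
definition cliff :: "quat \<Rightarrow> quat \<Rightarrow> quat \<Rightarrow> quat" where
  "cliff g X f = qmul (qmul (qconj g) X) f"

definition spin_nabla :: "(quat \<Rightarrow> quat) \<Rightarrow> quat \<Rightarrow> quat \<Rightarrow> quat" where
  "spin_nabla \<psi> g X = dderiv \<psi> g X +
     (1/4) *\<^sub>R (\<Sum>a<3. \<Sum>b<3. (lc_nabla (Efr a) g X \<bullet> Efr b g) *\<^sub>R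
                                  cliff g (Efr a g) (cliff g (Efr b g) (\<psi> g)))"

text \<open>the Killing spinor Phi = [u~, 1]\<close>
definition Phi :: "quat \<Rightarrow> quat" where "Phi g = qone"

definition gen_killing :: "(quat \<Rightarrow> quat) \<Rightarrow> bool" where
  "gen_killing \<psi> \<longleftrightarrow> (\<exists>A :: quat \<Rightarrow> quat \<Rightarrow> quat. \<forall>g\<in>S3.
      linear (A g)
    \<and> (\<forall>X. tangent g X \<longrightarrow> tangent g (A g X))
    \<and> (\<forall>X Y. tangent g X \<longrightarrow> tangent g Y \<longrightarrow> A g X \<bullet> Y = X \<bullet> A g Y)
    \<and> (\<forall>X. tangent g X \<longrightarrow> spin_nabla \<psi> g X = cliff g (A g X) (\<psi> g)))"

end

theory Submission
  imports Defs
begin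


lemmas qsimps = qmul_def qconj_def cross3_simps inner_prod_def forall_3

lemma S3_iff: "g \<in> S3 \<longleftrightarrow> g \<bullet> g = 1"
  by (simp add: S3_def norm_eq_1)

lemma deriv_tangent_zero:
  fixes h :: "quat \<Rightarrow> 'b::real_normed_vector"
  assumes g: "g \<in> S3" and X: "X \<bullet> g = 0" and hd: "h differentiable (at g)" and e: "e > 0"
    and loc: "\<forall>y\<in>S3. dist y g < e \<longrightarrow> h y = h g"
  shows "frechet_derivative h (at g) X = 0"
proof (cases "X = 0")
  case True
  then show ?thesis using linear_frechet_derivative[OF hd] by (simp add: linear_0)
next
  case False
  define u where "u = (1 / norm X) *\<^sub>R X"
  have nX: "norm X > 0" using False by simp
  have uu: "u \<bullet> u = 1" using nX by (simp add: u_def inner_commute power2_norm_eq_inner[symmetric] field_simps)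
  have ug: "u \<bullet> g = 0" using X by (simp add: u_def)
  have gg: "g \<bullet> g = 1" using g S3_iff by blast
  define \<gamma> where "\<gamma> = (\<lambda>t::real. cos t *\<^sub>R g + sin t *\<^sub>R u)"
  have \<gamma>0: "\<gamma> 0 = g" by (simp add: \<gamma>_def)
  have \<gamma>S: "\<gamma> t \<in> S3" for t
  proof -
    have "\<gamma> t \<bullet> \<gamma> t = (cos t)^2 * (g \<bullet> g) + 2 * cos t * sin t * (u \<bullet> g) + (sin t)^2 * (u \<bullet> u)"
      by (simp add: \<gamma>_def inner_add_left inner_add_right inner_commute power2_eq_square algebra_simps)
    also have "\<dots> = 1" using gg uu ug by simp
    finally show ?thesis using S3_iff by blast
  qed
  have d\<gamma>: "(\<gamma> has_derivative (\<lambda>t. t *\<^sub>R u)) (at 0)"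
    unfolding \<gamma>_def
    by (rule derivative_eq_intros refl | simp)+
  have dh: "(h has_derivative frechet_derivative h (at g)) (at (\<gamma> 0))"
    using hd \<gamma>0 frechet_derivative_works by metis
  have comp: "((h \<circ> \<gamma>) has_derivative (frechet_derivative h (at g) \<circ> (\<lambda>t. t *\<^sub>R u))) (at 0)"
    by (rule diff_chain_at[OF d\<gamma> dh])
  have cont: "continuous (at 0) \<gamma>" using d\<gamma> has_derivative_continuous by blast
  then have "\<forall>\<^sub>F t in at 0. dist (\<gamma> t) g < e"
    using e \<gamma>0 unfolding continuous_at tendsto_iff by simp
  then have ev: "\<forall>\<^sub>F t in at 0. (h \<circ> \<gamma>) t = (\<lambda>_. h g) t"
    by eventually_elim (use loc \<gamma>S in auto)
  have "((\<lambda>_. h g) has_derivative (frechet_derivative h (at g) \<circ> (\<lambda>t. t *\<^sub>R u))) (at 0)"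
    by (rule has_derivative_transform_eventually[OF comp ev]) (auto simp: \<gamma>0)
  moreover have "((\<lambda>_. h g) has_derivative (\<lambda>_. 0)) (at 0)" by simp
  ultimately have "(frechet_derivative h (at g) \<circ> (\<lambda>t. t *\<^sub>R u)) = (\<lambda>_. 0)"
    by (rule has_derivative_unique)
  then have "(frechet_derivative h (at g) \<circ> (\<lambda>t. t *\<^sub>R u)) 1 = 0" by simp
  then have "frechet_derivative h (at g) u = 0" by simp
  moreover have "X = norm X *\<^sub>R u" using nX by (simp add: u_def)
  ultimately show ?thesis using linear_cmul[OF linear_frechet_derivative[OF hd], of "norm X" u]
    by simp
qed

lemma qmul_assoc: "qmul (qmul p q) r = qmul p (qmul q r)"
  by (simp add: qsimps)

lemma qconj_mul: "qconj (qmul p q) = qmul (qconj q) (qconj p)"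
  by (simp add: qsimps)

lemma q_inner_left: "(qmul g p) \<bullet> (qmul g q) = (g \<bullet> g) * (p \<bullet> q)"
  by (simp add: qsimps)

lemma conj_g_g: "qmul (qconj g) g = (g \<bullet> g, 0)" and g_conj_g: "qmul g (qconj g) = (g \<bullet> g, 0)"
  by (simp_all add: qsimps)

lemma qmul_real_left: "qmul (r, 0) p = r *\<^sub>R p" and qmul_real_right: "qmul p (r, 0) = r *\<^sub>R p"
  by (simp_all add: qsimps prod_eq_iff)

lemma ug_left: "g \<bullet> g = 1 \<Longrightarrow> qmul (qconj g) (qmul g p) = p"
  by (simp add: qmul_assoc[symmetric] conj_g_g qmul_real_left)

lemma ug_right: "g \<bullet> g = 1 \<Longrightarrow> qmul g (qmul (qconj g) p) = p"
  by (simp add: qmul_assoc[symmetric] g_conj_g qmul_real_left)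

lemma fst_conjmul: "fst (qmul (qconj g) X) = g \<bullet> X"
  by (simp add: qsimps)

lemma qone_right[simp]: "qmul p qone = p" and qone_left[simp]: "qmul qone p = p"
  by (simp_all add: qsimps qone_def prod_eq_iff)

lemma qmul_add_right: "qmul p (a + b) = qmul p a + qmul p b"
  and qmul_add_left: "qmul (a + b) p = qmul a p + qmul b p"
  and qmul_diff_right: "qmul p (a - b) = qmul p a - qmul p b"
  and qmul_diff_left: "qmul (a - b) p = qmul a p - qmul b p"
  and qmul_scaleR_right: "qmul p (r *\<^sub>R a) = r *\<^sub>R qmul p a"
  and qmul_scaleR_left: "qmul (r *\<^sub>R a) p = r *\<^sub>R qmul a p"
  and qmul_uminus_right: "qmul p (- a) = - qmul p a"
  and qmul_uminus_left: "qmul (- a) p = - qmul a p"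
  and qmul_zero_right: "qmul p 0 = 0"
  and qmul_zero_left: "qmul 0 p = 0"
  by (simp_all add: qsimps prod_eq_iff)

lemma bilinear_qmul: "bilinear qmul"
  unfolding bilinear_def
  by (simp add: linear_iff qmul_add_right qmul_add_left qmul_scaleR_right qmul_scaleR_left)

lemma bounded_bilinear_qmul: "bounded_bilinear qmul"
  using bilinear_qmul bilinear_conv_bounded_bilinear by blast

lemma tangent_decomp: "g \<bullet> g = 1 \<Longrightarrow> X \<bullet> g = 0 \<Longrightarrow> X = qmul g (0, snd (qmul (qconj g) X))"
proof -
  assume gg: "g \<bullet> g = 1" and X: "X \<bullet> g = 0"
  have "qmul (qconj g) X = (0, snd (qmul (qconj g) X))"
    using X by (simp add: prod_eq_iff fst_conjmul inner_commute)
  then have "qmul g (qmul (qconj g) X) = qmul g (0, snd (qmul (qconj g) X))" by simp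
  then show ?thesis using ug_right[OF gg] by simp
qed

lemma inner_gq_g: "g \<bullet> g = 1 \<Longrightarrow> (qmul g q) \<bullet> g = fst q"
proof -
  assume gg: "g \<bullet> g = 1"
  have "(qmul g q) \<bullet> g = (qmul g q) \<bullet> (qmul g qone)" by simp
  also have "\<dots> = fst q" using gg by (simp only: q_inner_left) (simp add: qone_def inner_prod_def)
  finally show ?thesis .
qed

lemma tproj_gq: "g \<bullet> g = 1 \<Longrightarrow> tproj g (qmul g q) = qmul g (0, snd q)"
proof -
  assume gg: "g \<bullet> g = 1"
  have "tproj g (qmul g q) = qmul g q - fst q *\<^sub>R g" by (simp add: tproj_def inner_gq_g[OF gg])
  also have "\<dots> = qmul g (q - (fst q, 0))" by (simp add: qmul_diff_right qmul_real_right)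
  also have "q - (fst q, 0) = (0, snd q)" by (simp add: prod_eq_iff)
  finally show ?thesis .
qed

lemma qmul_left_eq0: "g \<bullet> g = 1 \<Longrightarrow> qmul g q = 0 \<longleftrightarrow> q = 0"
  by (metis ug_left qmul_zero_right)

lemma spin_sum: "(1/4) *\<^sub>R (\<Sum>a<3. \<Sum>b<3. ((0, snd (qmul (0,x) (eps a))) \<bullet> eps b) *\<^sub>R qmul (eps a) (qmul (eps b) f))
   = (1/2) *\<^sub>R qmul (0,x) f"
  by (simp add: eval_nat_numeral eps_def qi_def qj_def qk_def qsimps prod_eq_iff axis_def; simp add: field_simps)


lemma has_derivative_qmul_const_right: "((\<lambda>g. qmul g c) has_derivative (\<lambda>X. qmul X c)) F"
  by (rule bounded_linear_imp_has_derivative[OF bounded_bilinear.bounded_linear_left[OF bounded_bilinear_qmul]])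

lemma dEfr: "dderiv (Efr a) g X = qmul X (eps a)"
proof -
  have "(Efr a has_derivative (\<lambda>X. qmul X (eps a))) (at g)"
    unfolding Efr_def[abs_def] by (rule has_derivative_qmul_const_right)
  then show ?thesis unfolding dderiv_def using frechet_derivative_at by metis
qed

lemma spin_formula:
  assumes g: "g \<in> S3" and X: "X \<bullet> g = 0"
  shows "spin_nabla \<psi> g X = dderiv \<psi> g X + (1/2) *\<^sub>R qmul (qmul (qconj g) X) (\<psi> g)"
proof -
  have gg: "g \<bullet> g = 1" using g S3_iff by blast
  define x where "x = snd (qmul (qconj g) X)"
  have Xd: "X = qmul g (0, x)" using tangent_decomp[OF gg X] x_def by simp
  have cx: "qmul (qconj g) X = (0, x)" using Xd ug_left[OF gg] by simp
  have 1: "lc_nabla (Efr a) g X \<bullet> Efr b g = (0, snd (qmul (0,x) (eps a))) \<bullet> eps b" for a b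
  proof -
    have "lc_nabla (Efr a) g X = qmul g (0, snd (qmul (0,x) (eps a)))"
      unfolding lc_nabla_def dEfr Xd qmul_assoc using tproj_gq[OF gg] by simp
    then show ?thesis by (simp add: Efr_def q_inner_left gg)
  qed
  have 2: "cliff g (Efr a g) f = qmul (eps a) f" for a f
    by (simp add: cliff_def Efr_def ug_left[OF gg])
  show ?thesis unfolding spin_nabla_def 1 2 spin_sum cx by simp
qed






definition mapM :: "real^3 \<Rightarrow> real^3 \<Rightarrow> real^3 \<Rightarrow> real^3 \<Rightarrow> real^3" where
  "mapM m0 m1 m2 x = (x$1) *\<^sub>R m0 + (x$2) *\<^sub>R m1 + (x$3) *\<^sub>R m2"

definition Nq :: "real \<Rightarrow> real^3 \<Rightarrow> real^3 \<Rightarrow> real^3 \<Rightarrow> real^3 \<Rightarrow> real^3 \<Rightarrow> real^3 \<Rightarrow> quat" where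
  "Nq al v m0 m1 m2 w x = qmul (0, -x) (0, v) + (-(v \<bullet> x), mapM m0 m1 m2 x) + (w \<bullet> x, 0)
      + (1/2) *\<^sub>R qmul (0,x) (al, v)"

definition Yq where "Yq al v m0 m1 m2 w x = snd (qmul (Nq al v m0 m1 m2 w x) (al, -v))"

definition cvec :: "real^3 \<Rightarrow> real^3 \<Rightarrow> real^3 \<Rightarrow> real^3" where
  "cvec m0 m1 m2 = vector [m1$3 - m2$2, m2$1 - m0$3, m0$2 - m1$1]"

definition MTv where "MTv m0 m1 m2 v = (vector [m0 \<bullet> v, m1 \<bullet> v, m2 \<bullet> v] :: real^3)"

definition trM :: "real^3 \<Rightarrow> real^3 \<Rightarrow> real^3 \<Rightarrow> real" where "trM m0 m1 m2 = m0$1 + m1$2 + m2$3"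

definition Qv where "Qv al v m0 m1 m2 w = (2*al) *\<^sub>R v + al *\<^sub>R cvec m0 m1 m2 + trM m0 m1 m2 *\<^sub>R v
   - mapM m0 m1 m2 v + cross3 v w"

lemma core1: "Yq al v m0 m1 m2 w x \<bullet> x' - x \<bullet> Yq al v m0 m1 m2 w x' = Qv al v m0 m1 m2 w \<bullet> cross3 x x'"
  by (simp add: Yq_def Nq_def Qv_def mapM_def cvec_def trM_def qsimps)  (simp add: field_simps)

lemma core2: "- cross3 (mapM m0 m1 m2 v) v - (w \<bullet> v) *\<^sub>R v + al *\<^sub>R mapM m0 m1 m2 v + w
   = - cross3 v (Qv al v m0 m1 m2 w) + (1 - al^2 - v \<bullet> v) *\<^sub>R w + al *\<^sub>R (MTv m0 m1 m2 v + al *\<^sub>R w)"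
  by (simp add: MTv_def Qv_def mapM_def cvec_def trM_def qsimps power2_eq_square) 

lemma core3: "al * (v$1 * (m1$3 - m2$2) - v$2 * (m0$3 - m2$1) + v$3 * (m0$2 - m1$1))
   + (2*al + trM m0 m1 m2) * (1 - al^2) + al * (w \<bullet> v)
   = v \<bullet> Qv al v m0 m1 m2 w + (2*al + trM m0 m1 m2) * (1 - al^2 - v \<bullet> v) + (MTv m0 m1 m2 v + al *\<^sub>R w) \<bullet> v"
  by (simp add: MTv_def Qv_def mapM_def cvec_def trM_def qsimps power2_eq_square) 


lemma core4: "fst (qmul (Nq al v m0 m1 m2 w x) (al, -v)) = x \<bullet> (MTv m0 m1 m2 v + al *\<^sub>R w)"
  by (simp add: Nq_def MTv_def mapM_def qsimps) (simp add: field_simps)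

lemma cross_dot_zero: "cross3 v Q = 0 \<Longrightarrow> v \<bullet> Q = 0 \<Longrightarrow> v \<noteq> 0 \<Longrightarrow> Q = 0"
  using norm_cross_dot[of v Q] by simp

lemma core_fwd:
  assumes "al^2 + v \<bullet> v = 1" "MTv m0 m1 m2 v + al *\<^sub>R w = 0" "Qv al v m0 m1 m2 w = 0"
  shows "- cross3 (mapM m0 m1 m2 v) v - (w \<bullet> v) *\<^sub>R v + al *\<^sub>R mapM m0 m1 m2 v + w = 0"
    and "al * (v$1 * (m1$3 - m2$2) - v$2 * (m0$3 - m2$1) + v$3 * (m0$2 - m1$1))
   + (2*al + trM m0 m1 m2) * (1 - al^2) + al * (w \<bullet> v) = 0"
proof -
  have h: "1 - al^2 - v \<bullet> v = 0" using assms(1) by simp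
  show "- cross3 (mapM m0 m1 m2 v) v - (w \<bullet> v) *\<^sub>R v + al *\<^sub>R mapM m0 m1 m2 v + w = 0"
    using core2[of m0 m1 m2 v w al] h assms(2,3) by simp
  show "al * (v$1 * (m1$3 - m2$2) - v$2 * (m0$3 - m2$1) + v$3 * (m0$2 - m1$1))
   + (2*al + trM m0 m1 m2) * (1 - al^2) + al * (w \<bullet> v) = 0"
    using core3[of al v m1 m2 m0 w] h assms(2,3) by simp
qed

lemma core_bwd:
  assumes "al^2 + v \<bullet> v = 1" "MTv m0 m1 m2 v + al *\<^sub>R w = 0" "v \<noteq> 0"
    "- cross3 (mapM m0 m1 m2 v) v - (w \<bullet> v) *\<^sub>R v + al *\<^sub>R mapM m0 m1 m2 v + w = 0"
    "al * (v$1 * (m1$3 - m2$2) - v$2 * (m0$3 - m2$1) + v$3 * (m0$2 - m1$1))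
   + (2*al + trM m0 m1 m2) * (1 - al^2) + al * (w \<bullet> v) = 0"
  shows "Qv al v m0 m1 m2 w = 0"
proof -
  have h: "1 - al^2 - v \<bullet> v = 0" using assms(1) by simp
  have "cross3 v (Qv al v m0 m1 m2 w) = 0" using assms(2,4) h core2[of m0 m1 m2 v w al] by simp
  moreover have "v \<bullet> Qv al v m0 m1 m2 w = 0" using assms(2,5) h core3[of al v m1 m2 m0 w] by simp
  ultimately show ?thesis using cross_dot_zero assms(3) by blast
qed

lemma sym_iff_Q: "(\<forall>x x'. Yq al v m0 m1 m2 w x \<bullet> x' = x \<bullet> Yq al v m0 m1 m2 w x') \<longleftrightarrow> Qv al v m0 m1 m2 w = 0"
proof
  assume H: "\<forall>x x'. Yq al v m0 m1 m2 w x \<bullet> x' = x \<bullet> Yq al v m0 m1 m2 w x'"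
  have "Qv al v m0 m1 m2 w \<bullet> cross3 x x' = 0" for x x' using H core1[of al v m0 m1 m2 w x x'] by simp
  from this[of "axis 2 1" "axis 3 1"] this[of "axis 3 1" "axis 1 1"] this[of "axis 1 2" "axis 2 1"]
  show "Qv al v m0 m1 m2 w = 0" by (simp add: cross3_simps forall_3 axis_def)
next
  assume "Qv al v m0 m1 m2 w = 0"
  then show "\<forall>x x'. Yq al v m0 m1 m2 w x \<bullet> x' = x \<bullet> Yq al v m0 m1 m2 w x'"
    using core1[of al v m0 m1 m2 w] by (simp add: algebra_simps)
qed




definition ax :: "nat \<Rightarrow> real^3" where "ax a = snd (eps a)"

lemma eps_im: "eps a = (0, ax a)"
  by (simp add: ax_def eps_def qi_def qj_def qk_def prod_eq_iff)

lemma ax_vals[simp]: "ax 0 = axis 1 1" "ax 1 = axis 2 1" "ax 2 = axis 3 1"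
  by (simp_all add: ax_def eps_def qi_def qj_def qk_def)

lemma ax_vals2[simp]: "ax (Suc 0) = axis 2 1" "ax (Suc (Suc 0)) = axis 3 1"
  by (simp_all add: ax_def eps_def qi_def qj_def qk_def)

lemma inner_axis3[simp]: "x \<bullet> axis 1 1 = x$1" "x \<bullet> axis 2 1 = x$2" "x \<bullet> axis 3 1 = x$3" for x :: "real^3"
  by (simp_all add: inner_axis)

lemma im_expand: "(0::real, x) = (x$1) *\<^sub>R eps 0 + (x$2) *\<^sub>R eps 1 + (x$3) *\<^sub>R eps 2"
  by (simp add: eps_def qi_def qj_def qk_def prod_eq_iff vec_eq_iff forall_3 axis_def)

lemma im_expand_g: "qmul g (0, x) = (x$1) *\<^sub>R Efr 0 g + (x$2) *\<^sub>R Efr 1 g + (x$3) *\<^sub>R Efr 2 g"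
  by (subst im_expand) (simp add: Efr_def qmul_add_right qmul_scaleR_right)

lemma lin_expand:
  assumes gg: "g \<bullet> g = 1" and X: "X \<bullet> g = 0" and L: "linear L"
  shows "L X = (snd (qmul (qconj g) X) $ 1) *\<^sub>R L (Efr 0 g) + (snd (qmul (qconj g) X) $ 2) *\<^sub>R L (Efr 1 g)
     + (snd (qmul (qconj g) X) $ 3) *\<^sub>R L (Efr 2 g)"
proof -
  have "X = qmul g (0, snd (qmul (qconj g) X))" by (rule tangent_decomp[OF gg X])
  then have "L X = L ((snd (qmul (qconj g) X) $ 1) *\<^sub>R Efr 0 g + (snd (qmul (qconj g) X) $ 2) *\<^sub>R Efr 1 g
     + (snd (qmul (qconj g) X) $ 3) *\<^sub>R Efr 2 g)" by (simp only: im_expand_g)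
  then show ?thesis using L by (simp add: linear_add linear_cmul)
qed

lemma Efr_tan: "g \<bullet> g = 1 \<Longrightarrow> Efr a g \<bullet> g = 0"
  by (simp add: Efr_def inner_gq_g eps_im)

lemma conj_Efr: "g \<bullet> g = 1 \<Longrightarrow> qmul (qconj g) (Efr a g) = eps a"
  by (simp add: Efr_def ug_left)

lemma im_add: "(0::real, a + b) = (0, a) + (0, b)" and im_diff: "(0::real, a - b) = (0, a) - (0, b)"
  and im_scale: "(0::real, r *\<^sub>R a) = r *\<^sub>R (0, a)" and im_neg: "(0::real, - a) = - (0, a)"
  by (simp_all add: prod_eq_iff)

lemma bounded_linear_qconj: "bounded_linear qconj"
  by (rule linear_conv_bounded_linear[THEN iffD1]) (simp add: linear_iff qconj_def prod_eq_iff)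

definition vt where "vt V g = snd (qmul (qconj g) (V g))"
definition mt where "mt V a g = snd (qmul (qconj g) (dderiv V g (Efr a g)))"
definition wt :: "(quat \<Rightarrow> real) \<Rightarrow> quat \<Rightarrow> real^3" where
  "wt al g = vector [dderiv al g (Efr 0 g), dderiv al g (Efr 1 g), dderiv al g (Efr 2 g)]"

context
  fixes V :: "quat \<Rightarrow> quat" and al :: "quat \<Rightarrow> real"
  assumes tan: "\<forall>g\<in>S3. tangent g (V g)" and dV: "\<And>x. V differentiable (at x)"
    and dA: "\<And>x. al differentiable (at x)"
begin

lemma Vg: "g \<in> S3 \<Longrightarrow> V g = qmul g (0, vt V g)"
  unfolding vt_def by (rule tangent_decomp) (use tan S3_iff tangent_def in auto)

lemma fstD: assumes g: "g \<in> S3" and X: "X \<bullet> g = 0"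
  shows "dderiv V g X \<bullet> g = - (V g \<bullet> X)"
proof -
  have hd: "((\<lambda>y. V y \<bullet> y) has_derivative (\<lambda>h. V g \<bullet> h + dderiv V g h \<bullet> g)) (at g)"
    unfolding dderiv_def
    by (rule has_derivative_inner[OF frechet_derivative_works[THEN iffD1, OF dV] has_derivative_ident])
  then have d: "(\<lambda>y. V y \<bullet> y) differentiable (at g)" unfolding differentiable_def by blast
  have l: "\<forall>y\<in>S3. dist y g < 1 \<longrightarrow> V y \<bullet> y = V g \<bullet> g" using tan g by (simp add: tangent_def)
  have "frechet_derivative (\<lambda>y. V y \<bullet> y) (at g) X = 0"
    by (rule deriv_tangent_zero[OF g X d _ l]) simp
  moreover have "frechet_derivative (\<lambda>y. V y \<bullet> y) (at g) = (\<lambda>h. V g \<bullet> h + dderiv V g h \<bullet> g)"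
    using frechet_derivative_at[OF hd] by simp
  ultimately show ?thesis by simp
qed

lemma linD: "linear (dderiv V g)"
  unfolding dderiv_def[abs_def] using linear_frechet_derivative[OF dV] by simp

lemma linA: "linear (dderiv al g)"
  unfolding dderiv_def[abs_def] using linear_frechet_derivative[OF dA] by simp

lemma Dq: assumes g: "g \<in> S3"
  shows "qmul (qconj g) (dderiv V g (Efr a g)) = (- (vt V g \<bullet> ax a), mt V a g)"
proof -
  have gg: "g \<bullet> g = 1" using g S3_iff by blast
  have "fst (qmul (qconj g) (dderiv V g (Efr a g))) = dderiv V g (Efr a g) \<bullet> g"
    by (simp add: fst_conjmul inner_commute)
  also have "\<dots> = - (V g \<bullet> Efr a g)" using fstD[OF g Efr_tan[OF gg]] .
  also have "V g \<bullet> Efr a g = vt V g \<bullet> ax a"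
    using Vg[OF g] by (simp only: Efr_def eps_im q_inner_left gg) (simp add: inner_prod_def)
  finally show ?thesis by (simp add: mt_def prod_eq_iff)
qed


lemma DVX: assumes g: "g \<in> S3" and X: "X \<bullet> g = 0"
  shows "qmul (qconj g) (dderiv V g X) = (- (vt V g \<bullet> snd (qmul (qconj g) X)),
     mapM (mt V 0 g) (mt V 1 g) (mt V 2 g) (snd (qmul (qconj g) X)))"
proof -
  have gg: "g \<bullet> g = 1" using g S3_iff by blast
  have L: "linear (\<lambda>X. qmul (qconj g) (dderiv V g X))"
    using linD[of g] by (simp add: linear_iff qmul_add_right qmul_scaleR_right)
  show ?thesis
    unfolding lin_expand[OF gg X L] Dq[OF g] ax_vals inner_axis3
    by (simp add: mapM_def inner_vec_def sum_3 algebra_simps)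
qed

lemma DAX: assumes g: "g \<in> S3" and X: "X \<bullet> g = 0"
  shows "dderiv al g X = wt al g \<bullet> snd (qmul (qconj g) X)"
proof -
  have gg: "g \<bullet> g = 1" using g S3_iff by blast
  show ?thesis
    unfolding lin_expand[OF gg X linA] by (simp add: wt_def inner_vec_def sum_3 algebra_simps)
qed

lemma lcVX: assumes g: "g \<in> S3" and X: "X \<bullet> g = 0"
  shows "lc_nabla V g X = qmul g (0, mapM (mt V 0 g) (mt V 1 g) (mt V 2 g) (snd (qmul (qconj g) X)))"
proof -
  have gg: "g \<bullet> g = 1" using g S3_iff by blast
  have "lc_nabla V g X = tproj g (qmul g (qmul (qconj g) (dderiv V g X)))"
    unfolding lc_nabla_def ug_right[OF gg] ..
  then show ?thesis unfolding tproj_gq[OF gg] DVX[OF g X] by simp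
qed

lemma conjV: "g \<in> S3 \<Longrightarrow> qmul (qconj g) (V g) = (0, vt V g)"
  using Vg ug_left S3_iff by metis

lemma norm_eq: "g \<in> S3 \<Longrightarrow> (norm (V g))^2 = vt V g \<bullet> vt V g"
proof -
  assume g: "g \<in> S3"
  have gg: "g \<bullet> g = 1" using g S3_iff by blast
  define v where "v = vt V g"
  have e: "V g = qmul g (0, v)" using Vg[OF g] v_def by simp
  have "(norm (V g))^2 = V g \<bullet> V g" by (simp add: power2_norm_eq_inner)
  also have "\<dots> = (0, v) \<bullet> (0, v)" unfolding e q_inner_left gg by simp
  finally show ?thesis by (simp add: inner_prod_def v_def)
qed

lemma Psi_eq: "g \<in> S3 \<Longrightarrow> cliff g (V g) (Phi g) + al g *\<^sub>R Phi g = (al g, vt V g)"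
  by (simp add: cliff_def Phi_def conjV qone_def qmul_real_right prod_eq_iff)


lemma VE: "g \<in> S3 \<Longrightarrow> V g \<bullet> Efr a g = vt V g \<bullet> ax a"
proof -
  assume g: "g \<in> S3"
  have gg: "g \<bullet> g = 1" using g S3_iff by blast
  define v where "v = vt V g"
  have e: "V g = qmul g (0, v)" using Vg[OF g] v_def by simp
  show ?thesis unfolding e Efr_def eps_im q_inner_left gg v_def[symmetric] by (simp add: inner_prod_def)
qed

lemma lcEa: assumes g: "g \<in> S3" shows "lc_nabla V g (Efr a g) = qmul g (0, mapM (mt V 0 g) (mt V 1 g) (mt V 2 g) (ax a))"
proof -
  have gg: "g \<bullet> g = 1" using g S3_iff by blast
  show ?thesis unfolding lcVX[OF g Efr_tan[OF gg]] conj_Efr[OF gg] eps_im by simp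
qed

lemma lcE: assumes g: "g \<in> S3" shows "lc_nabla V g (Efr 0 g) = qmul g (0, mt V 0 g)"
  "lc_nabla V g (Efr 1 g) = qmul g (0, mt V 1 g)" "lc_nabla V g (Efr 2 g) = qmul g (0, mt V 2 g)"
proof -
  have gg: "g \<bullet> g = 1" using g S3_iff by blast
  show "lc_nabla V g (Efr 0 g) = qmul g (0, mt V 0 g)" "lc_nabla V g (Efr 1 g) = qmul g (0, mt V 1 g)"
    "lc_nabla V g (Efr 2 g) = qmul g (0, mt V 2 g)"
    unfolding lcVX[OF g Efr_tan[OF gg]] conj_Efr[OF gg] eps_im
    by (simp_all add: mapM_def axis_def)
qed

lemma EE: "g \<in> S3 \<Longrightarrow> qmul g (0, m) \<bullet> Efr b g = m \<bullet> ax b"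
proof -
  assume g: "g \<in> S3"
  have gg: "g \<bullet> g = 1" using g S3_iff by blast
  show ?thesis unfolding Efr_def eps_im q_inner_left gg by (simp add: inner_prod_def)
qed

lemma dfun_eq: "g \<in> S3 \<Longrightarrow> dfun al g = qmul g (0, wt al g)"
  unfolding dfun_def im_expand_g by (simp add: wt_def eval_nat_numeral)

lemma interior_eq: assumes g: "g \<in> S3"
  shows "interior2 g (V g) (hodge1 g (qmul g (0, n))) = qmul g (0, cross3 n (vt V g))"
proof -
  have gg: "g \<bullet> g = 1" using g S3_iff by blast
  have "vol g (qmul g (0, n)) (V g) (Efr a g) = cross3 n (vt V g) \<bullet> ax a" for a
    unfolding vol_def ug_left[OF gg] conjV[OF g] conj_Efr[OF gg] by (simp add: eps_im)
  then show ?thesis unfolding interior2_def hodge1_def im_expand_g[of g "cross3 n (vt V g)"]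
    by (simp add: eval_nat_numeral)
qed

lemma ii_eq: assumes g: "g \<in> S3"
  shows "- interior2 g (V g) (hodge1 g (lc_nabla V g (V g)))
               - vderiv V al g *\<^sub>R V g + al g *\<^sub>R lc_nabla V g (V g) + dfun al g
     = qmul g (0, - cross3 (mapM (mt V 0 g) (mt V 1 g) (mt V 2 g) (vt V g)) (vt V g)
        - (wt al g \<bullet> vt V g) *\<^sub>R vt V g + al g *\<^sub>R mapM (mt V 0 g) (mt V 1 g) (mt V 2 g) (vt V g) + wt al g)"
proof -
  have gg: "g \<bullet> g = 1" using g S3_iff by blast
  have Vt: "V g \<bullet> g = 0" using tan g by (simp add: tangent_def)
  have lc: "lc_nabla V g (V g) = qmul g (0, mapM (mt V 0 g) (mt V 1 g) (mt V 2 g) (vt V g))"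
    using lcVX[OF g Vt] conjV[OF g] by simp
  have vd: "vderiv V al g = wt al g \<bullet> vt V g"
    unfolding vderiv_def DAX[OF g Vt] conjV[OF g] by simp
  have e: "V g = qmul g (0, vt V g)" using Vg[OF g] by simp
  have e2: "(wt al g \<bullet> vt V g) *\<^sub>R V g = qmul g (0, (wt al g \<bullet> vt V g) *\<^sub>R vt V g)"
    by (simp only: im_scale qmul_scaleR_right e[symmetric])
  define n where "n = mapM (mt V 0 g) (mt V 1 g) (mt V 2 g) (vt V g)"
  define c where "c = cross3 n (vt V g)"
  have "- qmul g (0, c) - qmul g (0, (wt al g \<bullet> vt V g) *\<^sub>R vt V g) + al g *\<^sub>R qmul g (0, n) + qmul g (0, wt al g)
     = qmul g (- (0, c) - (0, (wt al g \<bullet> vt V g) *\<^sub>R vt V g) + al g *\<^sub>R (0, n) + (0, wt al g))"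
    by (simp only: qmul_uminus_right qmul_diff_right qmul_scaleR_right qmul_add_right)
  also have "- (0, c) - (0, (wt al g \<bullet> vt V g) *\<^sub>R vt V g) + al g *\<^sub>R (0, n) + (0, wt al g)
     = (0::real, - c - (wt al g \<bullet> vt V g) *\<^sub>R vt V g + al g *\<^sub>R n + wt al g)"
    by (simp add: prod_eq_iff)
  finally show ?thesis
    unfolding lc interior_eq[OF g] vd dfun_eq[OF g] e2 n_def[symmetric] c_def[symmetric] .
qed

lemma iii_eq: assumes g: "g \<in> S3"
  shows "al g * hodge3 g (wedge12 (V g) (dvf V g))
               + (2 * al g - codiff V g) * (1 - (al g)\<^sup>2) + al g * vderiv V al g
   = al g * (vt V g$1 * (mt V 1 g$3 - mt V 2 g$2) - vt V g$2 * (mt V 0 g$3 - mt V 2 g$1) + vt V g$3 * (mt V 0 g$2 - mt V 1 g$1))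
   + (2 * al g + trM (mt V 0 g) (mt V 1 g) (mt V 2 g)) * (1 - (al g)^2) + al g * (wt al g \<bullet> vt V g)"
proof -
  have gg: "g \<bullet> g = 1" using g S3_iff by blast
  have Vt: "V g \<bullet> g = 0" using tan g by (simp add: tangent_def)
  have vd: "vderiv V al g = wt al g \<bullet> vt V g"
    unfolding vderiv_def DAX[OF g Vt] conjV[OF g] by simp
  have cd: "codiff V g = - trM (mt V 0 g) (mt V 1 g) (mt V 2 g)"
    unfolding codiff_def by (simp add: eval_nat_numeral lcEa[OF g] EE[OF g] trM_def mapM_def) (simp add: axis_def)
  have h3: "hodge3 g (wedge12 (V g) (dvf V g)) = vt V g$1 * (mt V 1 g$3 - mt V 2 g$2) - vt V g$2 * (mt V 0 g$3 - mt V 2 g$1) + vt V g$3 * (mt V 0 g$2 - mt V 1 g$1)"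
    unfolding hodge3_def wedge12_def dvf_def lcE[OF g] EE[OF g] VE[OF g] by (simp add: algebra_simps)
  show ?thesis unfolding vd cd h3 by simp
qed


lemma dPsi: "((\<lambda>g. cliff g (V g) (Phi g) + al g *\<^sub>R Phi g) has_derivative
    (\<lambda>X. qmul (qconj g) (dderiv V g X) + qmul (qconj X) (V g) + dderiv al g X *\<^sub>R qone)) (at g)"
proof -
  have e: "(\<lambda>g. cliff g (V g) (Phi g) + al g *\<^sub>R Phi g) = (\<lambda>g. qmul (qconj g) (V g) + al g *\<^sub>R qone)"
    by (simp add: cliff_def Phi_def)
  have hq: "(qconj has_derivative qconj) (at g)"
    by (rule bounded_linear_imp_has_derivative[OF bounded_linear_qconj])
  have hV: "(V has_derivative dderiv V g) (at g)"
    unfolding dderiv_def[abs_def] using frechet_derivative_works dV by blast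
  have hA: "(al has_derivative dderiv al g) (at g)"
    unfolding dderiv_def[abs_def] using frechet_derivative_works dA by blast
  have h1: "((\<lambda>g. qmul (qconj g) (V g)) has_derivative (\<lambda>h. qmul (qconj g) (dderiv V g h) + qmul (qconj h) (V g))) (at g)"
    by (rule bounded_bilinear.FDERIV[OF bounded_bilinear_qmul hq hV])
  have h2: "((\<lambda>g. al g *\<^sub>R qone) has_derivative (\<lambda>h. dderiv al g h *\<^sub>R qone)) (at g)"
    using has_derivative_scaleR[OF hA has_derivative_const[of qone]] by simp
  show ?thesis unfolding e using has_derivative_add[OF h1 h2] by simp
qed

lemma spin_eq:
  assumes g: "g \<in> S3" and X: "X \<bullet> g = 0"
  shows "spin_nabla (\<lambda>g. cliff g (V g) (Phi g) + al g *\<^sub>R Phi g) g X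
     = Nq (al g) (vt V g) (mt V 0 g) (mt V 1 g) (mt V 2 g) (wt al g) (snd (qmul (qconj g) X))"
proof -
  have gg: "g \<bullet> g = 1" using g S3_iff by blast
  define x where "x = snd (qmul (qconj g) X)"
  have Xd: "X = qmul g (0, x)" using tangent_decomp[OF gg X] x_def by simp
  have cx: "qmul (qconj g) X = (0, x)" using Xd ug_left[OF gg] by simp
  have dd: "dderiv (\<lambda>g. cliff g (V g) (Phi g) + al g *\<^sub>R Phi g) g X
      = qmul (qconj g) (dderiv V g X) + qmul (qconj X) (V g) + dderiv al g X *\<^sub>R qone"
    unfolding dderiv_def by (simp add: frechet_derivative_at[OF dPsi, symmetric] dderiv_def)
  have cXV: "qmul (qconj X) (V g) = qmul (0, -x) (0, vt V g)"
  proof -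
    have "qconj X = qmul (0, -x) (qconj g)" unfolding Xd qconj_mul by (simp add: qconj_def)
    then show ?thesis by (simp add: qmul_assoc conjV[OF g])
  qed
  show ?thesis
    unfolding spin_formula[OF g X] dd cXV DVX[OF g X] DAX[OF g X] Psi_eq[OF g] x_def[symmetric] cx
    by (simp add: Nq_def qone_def inner_commute)
qed

lemma C2: assumes n1: "\<forall>g\<in>S3. (al g)\<^sup>2 + (norm (V g))\<^sup>2 = 1" and g: "g \<in> S3"
  shows "MTv (mt V 0 g) (mt V 1 g) (mt V 2 g) (vt V g) + al g *\<^sub>R wt al g = 0"
proof -
  have gg: "g \<bullet> g = 1" using g S3_iff by blast
  have hV: "(V has_derivative dderiv V g) (at g)"
    unfolding dderiv_def[abs_def] using frechet_derivative_works dV by blast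
  have hA: "(al has_derivative dderiv al g) (at g)"
    unfolding dderiv_def[abs_def] using frechet_derivative_works dA by blast
  have hd: "((\<lambda>y. al y * al y + V y \<bullet> V y) has_derivative
      (\<lambda>h. (al g * dderiv al g h + dderiv al g h * al g) + (V g \<bullet> dderiv V g h + dderiv V g h \<bullet> V g))) (at g)"
    by (rule has_derivative_add[OF has_derivative_mult[OF hA hA] has_derivative_inner[OF hV hV]])
  then have d: "(\<lambda>y. al y * al y + V y \<bullet> V y) differentiable (at g)" unfolding differentiable_def by blast
  have l: "\<forall>y\<in>S3. dist y g < 1 \<longrightarrow> al y * al y + V y \<bullet> V y = al g * al g + V g \<bullet> V g"
  proof -
    have "\<forall>y\<in>S3. al y * al y + V y \<bullet> V y = 1" using n1 by (simp add: dot_square_norm power2_eq_square)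
    then show ?thesis using g by auto
  qed
  have fd: "frechet_derivative (\<lambda>y. al y * al y + V y \<bullet> V y) (at g) =
      (\<lambda>h. (al g * dderiv al g h + dderiv al g h * al g) + (V g \<bullet> dderiv V g h + dderiv V g h \<bullet> V g))"
    using frechet_derivative_at[OF hd] by simp
  have z: "al g * dderiv al g (Efr a g) + mt V a g \<bullet> vt V g = 0" for a
  proof -
    have "frechet_derivative (\<lambda>y. al y * al y + V y \<bullet> V y) (at g) (Efr a g) = 0"
      by (rule deriv_tangent_zero[OF g Efr_tan[OF gg] d _ l]) simp
    then have "al g * dderiv al g (Efr a g) + V g \<bullet> dderiv V g (Efr a g) = 0"
      unfolding fd by (simp add: inner_commute)
    moreover have "V g \<bullet> dderiv V g (Efr a g) = mt V a g \<bullet> vt V g"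
    proof -
      define v where "v = vt V g"
      have e: "V g = qmul g (0, v)" using Vg[OF g] v_def by simp
      have "V g \<bullet> dderiv V g (Efr a g) = qmul g (0, vt V g) \<bullet> qmul g (qmul (qconj g) (dderiv V g (Efr a g)))"
        unfolding ug_right[OF gg] v_def[symmetric] e ..
      also have "\<dots> = (0, vt V g) \<bullet> (- (vt V g \<bullet> ax a), mt V a g)"
        unfolding q_inner_left gg Dq[OF g] by simp
      finally show ?thesis by (simp add: inner_prod_def inner_commute)
    qed
    ultimately show ?thesis by simp
  qed
  show ?thesis using z[of 0] z[of 1] z[of 2]
    by (simp add: MTv_def wt_def vec_eq_iff forall_3 algebra_simps)
qed

end



lemma smooth_diff: "smooth_fun F \<Longrightarrow> F differentiable (at x)"
  unfolding smooth_fun_def by (metis iter_deriv.simps(1))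

lemma cont_fd:
  fixes F :: "quat \<Rightarrow> 'b::real_normed_vector"
  assumes sF: "smooth_fun F" and h: "continuous_on UNIV h"
  shows "continuous_on UNIV (\<lambda>g. frechet_derivative F (at g) (h g))"
proof -
  have cb: "continuous_on UNIV (\<lambda>g. frechet_derivative F (at g) b)" for b
  proof -
    have "\<forall>x. iter_deriv F [b] differentiable (at x)" using sF unfolding smooth_fun_def by blast
    then have "\<forall>x. (\<lambda>x. frechet_derivative F (at x) b) differentiable (at x)" by simp
    then show ?thesis
      by (simp add: continuous_at_imp_continuous_on differentiable_imp_continuous_within)
  qed
  have e: "frechet_derivative F (at g) (h g) = (\<Sum>b\<in>Basis. (h g \<bullet> b) *\<^sub>R frechet_derivative F (at g) b)" for g
  proof -
    have lin: "linear (frechet_derivative F (at g))"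
      by (rule linear_frechet_derivative[OF smooth_diff[OF sF]])
    have "frechet_derivative F (at g) (h g) = frechet_derivative F (at g) (\<Sum>b\<in>Basis. (h g \<bullet> b) *\<^sub>R b)"
      by (simp add: euclidean_representation)
    also have "\<dots> = (\<Sum>b\<in>Basis. (h g \<bullet> b) *\<^sub>R frechet_derivative F (at g) b)"
      by (simp add: linear_sum[OF lin] linear_cmul[OF lin])
    finally show ?thesis .
  qed
  show ?thesis unfolding e
    by (intro continuous_intros cb h)
qed

lemma cont_qmul: "continuous_on S f \<Longrightarrow> continuous_on S g \<Longrightarrow> continuous_on S (\<lambda>x. qmul (f x) (g x))"
  by (rule bounded_bilinear.continuous_on[OF bounded_bilinear_qmul])

lemma cont_qconj: "continuous_on S f \<Longrightarrow> continuous_on S (\<lambda>x. qconj (f x))"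
  using bounded_linear.continuous_on[OF bounded_linear_qconj] by blast

lemma vector3_eq: "(vector [a, b, c] :: real^3) = a *\<^sub>R axis 1 1 + b *\<^sub>R axis 2 1 + c *\<^sub>R axis 3 1"
  by (simp add: vec_eq_iff forall_3 axis_def)

lemma cont_Efr: "continuous_on UNIV (Efr a)"
  unfolding Efr_def[abs_def] by (intro cont_qmul continuous_intros)

definition Qfun where "Qfun V al g = Qv (al g) (vt V g) (mt V 0 g) (mt V 1 g) (mt V 2 g) (wt al g)"

lemma cont_Qfun:
  assumes sV: "smooth_fun V" and sA: "smooth_fun al"
  shows "continuous_on UNIV (Qfun V al)"
proof -
  have cV: "continuous_on UNIV V"
    using smooth_diff[OF sV] by (simp add: continuous_at_imp_continuous_on differentiable_imp_continuous_within)
  have cA: "continuous_on UNIV al"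
    using smooth_diff[OF sA] by (simp add: continuous_at_imp_continuous_on differentiable_imp_continuous_within)
  have cv: "continuous_on UNIV (vt V)"
    unfolding vt_def[abs_def] by (intro continuous_intros cont_qmul cont_qconj cV)
  have cm: "continuous_on UNIV (mt V a)" for a
    unfolding mt_def[abs_def] dderiv_def
    by (intro continuous_intros cont_qmul cont_qconj cont_fd[OF sV] cont_Efr)
  have cw: "continuous_on UNIV (wt al)"
    unfolding wt_def[abs_def] dderiv_def vector3_eq
    by (intro continuous_intros cont_fd[OF sA] cont_Efr)
  show ?thesis
    unfolding Qfun_def[abs_def] Qv_def cvec_def trM_def mapM_def vector3_eq
    by (intro continuous_intros continuous_on_cross cv cm cw cA)
qed




lemma Yq_linear: "linear (Yq al v m0 m1 m2 w)"
  unfolding linear_iff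
  by (simp add: Yq_def Nq_def mapM_def qsimps) (simp add: field_simps)

lemma qmul_pair_conj: "qmul (a, v) (a, -v) = (a\<^sup>2 + v \<bullet> v, 0)" "qmul (a, -v) (a, v) = (a\<^sup>2 + v \<bullet> v, 0)"
  by (simp_all add: qsimps power2_eq_square)

lemma Y_from_A: assumes "a\<^sup>2 + v \<bullet> v = 1" "Nq a v m0 m1 m2 w x = qmul (0, y) (a, v)"
  shows "Yq a v m0 m1 m2 w x = y"
  unfolding Yq_def assms(2) qmul_assoc qmul_pair_conj assms(1) by (simp add: qmul_real_right)

lemma N_from_Y: assumes "a\<^sup>2 + v \<bullet> v = 1" "MTv m0 m1 m2 v + a *\<^sub>R w = 0"
  shows "qmul (0, Yq a v m0 m1 m2 w x) (a, v) = Nq a v m0 m1 m2 w x"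
proof -
  have "qmul (Nq a v m0 m1 m2 w x) (a, -v) = (0, Yq a v m0 m1 m2 w x)"
    using core4[of a v m0 m1 m2 w x] assms(2) by (simp add: Yq_def prod_eq_iff)
  then have "qmul (0, Yq a v m0 m1 m2 w x) (a, v) = qmul (qmul (Nq a v m0 m1 m2 w x) (a, -v)) (a, v)" by simp
  also have "\<dots> = Nq a v m0 m1 m2 w x" unfolding qmul_assoc qmul_pair_conj assms(1) by (simp add: qmul_real_right)
  finally show ?thesis .
qed


context
  fixes V :: "quat \<Rightarrow> quat" and al :: "quat \<Rightarrow> real"
  assumes tan: "\<forall>g\<in>S3. tangent g (V g)" and sV: "smooth_fun V" and sA: "smooth_fun al"
begin

lemma dV: "V differentiable (at x)" by (rule smooth_diff[OF sV])
lemma dA: "al differentiable (at x)" by (rule smooth_diff[OF sA])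

lemmas spinE = spin_eq[OF tan dV dA] and C2E = C2[OF tan dV dA] and normE = norm_eq[OF tan dV dA]
  and PsiE = Psi_eq[OF tan dV dA] and iiE = ii_eq[OF tan dV dA] and iiiE = iii_eq[OF tan dV dA]
  and VgE = Vg[OF tan dV dA]

lemma tanX: "g \<in> S3 \<Longrightarrow> qmul g (0, x) \<bullet> g = 0" and sndX: "g \<in> S3 \<Longrightarrow> snd (qmul (qconj g) (qmul g (0, x))) = x"
  by (simp_all add: inner_gq_g ug_left S3_iff)

lemma kill_fwd:
  assumes gk: "gen_killing (\<lambda>g. cliff g (V g) (Phi g) + al g *\<^sub>R Phi g)"
    and n1: "\<forall>g\<in>S3. (al g)\<^sup>2 + (norm (V g))\<^sup>2 = 1" and g: "g \<in> S3"
  shows "Qfun V al g = 0"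
proof -
  have gg: "g \<bullet> g = 1" using g S3_iff by blast
  obtain A where HA: "\<forall>g\<in>S3. linear (A g) \<and> (\<forall>X. tangent g X \<longrightarrow> tangent g (A g X))
    \<and> (\<forall>X Y. tangent g X \<longrightarrow> tangent g Y \<longrightarrow> A g X \<bullet> Y = X \<bullet> A g Y)
    \<and> (\<forall>X. tangent g X \<longrightarrow> spin_nabla (\<lambda>g. cliff g (V g) (Phi g) + al g *\<^sub>R Phi g) g X
          = cliff g (A g X) (cliff g (V g) (Phi g) + al g *\<^sub>R Phi g))"
    using gk unfolding gen_killing_def by blast
  have Hg: "(\<forall>X. tangent g X \<longrightarrow> tangent g (A g X))
    \<and> (\<forall>X Y. tangent g X \<longrightarrow> tangent g Y \<longrightarrow> A g X \<bullet> Y = X \<bullet> A g Y)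
    \<and> (\<forall>X. tangent g X \<longrightarrow> spin_nabla (\<lambda>g. cliff g (V g) (Phi g) + al g *\<^sub>R Phi g) g X
          = cliff g (A g X) (cliff g (V g) (Phi g) + al g *\<^sub>R Phi g))" using HA g by blast
  then have H2: "\<And>X. tangent g X \<Longrightarrow> tangent g (A g X)"
    and H3: "\<And>X Y. tangent g X \<Longrightarrow> tangent g Y \<Longrightarrow> A g X \<bullet> Y = X \<bullet> A g Y"
    and H4: "\<And>X. tangent g X \<Longrightarrow> spin_nabla (\<lambda>g. cliff g (V g) (Phi g) + al g *\<^sub>R Phi g) g X
          = cliff g (A g X) (cliff g (V g) (Phi g) + al g *\<^sub>R Phi g)" by blast+
  have tX: "tangent g (qmul g (0, x))" for x unfolding tangent_def by (rule tanX[OF g])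
  define v where "v = vt V g"
  define y where "y x = snd (qmul (qconj g) (A g (qmul g (0, x))))" for x
  have n: "(al g)\<^sup>2 + (norm (V g))\<^sup>2 = 1" using n1 g by blast
  have a1: "(al g)\<^sup>2 + v \<bullet> v = 1" using n normE[OF g] v_def by simp
  have Ay: "A g (qmul g (0, x)) = qmul g (0, y x)" for x
  proof -
    have "tangent g (A g (qmul g (0, x)))" by (rule H2[OF tX])
    then show ?thesis unfolding y_def by (intro tangent_decomp gg) (simp add: tangent_def)
  qed
  have Yy: "Yq (al g) v (mt V 0 g) (mt V 1 g) (mt V 2 g) (wt al g) x = y x" for x
  proof (rule Y_from_A[OF a1])
    have "spin_nabla (\<lambda>g. cliff g (V g) (Phi g) + al g *\<^sub>R Phi g) g (qmul g (0, x))
          = cliff g (A g (qmul g (0, x))) (cliff g (V g) (Phi g) + al g *\<^sub>R Phi g)"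
      by (rule H4[OF tX])
    also have "\<dots> = qmul (0, y x) (al g, v)" unfolding PsiE[OF g] unfolding Ay cliff_def ug_left[OF gg] v_def ..
    finally show "Nq (al g) v (mt V 0 g) (mt V 1 g) (mt V 2 g) (wt al g) x = qmul (0, y x) (al g, v)"
      using spinE[OF g tanX[OF g]] sndX[OF g] v_def by simp
  qed
  have "\<forall>x x'. Yq (al g) v (mt V 0 g) (mt V 1 g) (mt V 2 g) (wt al g) x \<bullet> x'
         = x \<bullet> Yq (al g) v (mt V 0 g) (mt V 1 g) (mt V 2 g) (wt al g) x'"
  proof (intro allI)
    fix x x'
    have "A g (qmul g (0, x)) \<bullet> qmul g (0, x') = qmul g (0, x) \<bullet> A g (qmul g (0, x'))"
      by (rule H3[OF tX tX])
    then have "y x \<bullet> x' = x \<bullet> y x'" unfolding Ay q_inner_left gg by (simp add: inner_prod_def)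
    then show "Yq (al g) v (mt V 0 g) (mt V 1 g) (mt V 2 g) (wt al g) x \<bullet> x'
         = x \<bullet> Yq (al g) v (mt V 0 g) (mt V 1 g) (mt V 2 g) (wt al g) x'" unfolding Yy .
  qed
  then show ?thesis unfolding sym_iff_Q Qfun_def v_def .
qed

lemma kill_bwd:
  assumes n1: "\<forall>g\<in>S3. (al g)\<^sup>2 + (norm (V g))\<^sup>2 = 1" and Q: "\<forall>g\<in>S3. Qfun V al g = 0"
  shows "gen_killing (\<lambda>g. cliff g (V g) (Phi g) + al g *\<^sub>R Phi g)"
proof -
  define Yg where "Yg g = Yq (al g) (vt V g) (mt V 0 g) (mt V 1 g) (mt V 2 g) (wt al g)" for g
  define A where "A g X = qmul g (0, Yg g (snd (qmul (qconj g) X)))" for g X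
  show ?thesis unfolding gen_killing_def
  proof (intro exI[of _ A] ballI conjI allI impI)
    fix g assume g: "g \<in> S3"
    have gg: "g \<bullet> g = 1" using g S3_iff by blast
    have n: "(al g)\<^sup>2 + (norm (V g))\<^sup>2 = 1" using n1 g by blast
    have a1: "(al g)\<^sup>2 + vt V g \<bullet> vt V g = 1" using n normE[OF g] by simp
    have Qg: "Qv (al g) (vt V g) (mt V 0 g) (mt V 1 g) (mt V 2 g) (wt al g) = 0"
      using Q g unfolding Qfun_def by blast
    have sym: "Yg g x \<bullet> x' = x \<bullet> Yg g x'" for x x'
      using sym_iff_Q[THEN iffD2, OF Qg] unfolding Yg_def by blast
    have lY: "linear (Yg g)" unfolding Yg_def by (rule Yq_linear)
    have l1: "linear (\<lambda>X. qmul (qconj g) X)" by (simp add: linear_iff qmul_add_right qmul_scaleR_right)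
    have l2: "linear (snd :: quat \<Rightarrow> real^3)" by (simp add: linear_iff)
    have l3: "linear (\<lambda>z::real^3. (0::real, z))" by (simp add: linear_iff prod_eq_iff)
    have l4: "linear (\<lambda>X. qmul g X)" by (simp add: linear_iff qmul_add_right qmul_scaleR_right)
    have "A g = (\<lambda>X. qmul g X) \<circ> (\<lambda>z. (0, z)) \<circ> Yg g \<circ> snd \<circ> (\<lambda>X. qmul (qconj g) X)"
      by (simp add: A_def fun_eq_iff)
    then show "linear (A g)" by (simp only: linear_compose l1 l2 l3 l4 lY)
    fix X
    show "tangent g X \<Longrightarrow> tangent g (A g X)" unfolding A_def tangent_def by (simp add: inner_gq_g gg)
    show "tangent g X \<Longrightarrow> spin_nabla (\<lambda>g. cliff g (V g) (Phi g) + al g *\<^sub>R Phi g) g X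
          = cliff g (A g X) (cliff g (V g) (Phi g) + al g *\<^sub>R Phi g)"
    proof -
      assume "tangent g X"
      then have X: "X \<bullet> g = 0" by (simp add: tangent_def)
      show ?thesis unfolding spinE[OF g X] PsiE[OF g] unfolding A_def cliff_def ug_left[OF gg] Yg_def
        using N_from_Y[OF a1 C2E[OF n1 g]] by simp
    qed
    fix Y
    show "tangent g X \<Longrightarrow> tangent g Y \<Longrightarrow> A g X \<bullet> Y = X \<bullet> A g Y"
    proof -
      assume "tangent g X" "tangent g Y"
      then have X: "X \<bullet> g = 0" and Y: "Y \<bullet> g = 0" by (simp_all add: tangent_def)
      define x where "x = snd (qmul (qconj g) X)"
      define y where "y = snd (qmul (qconj g) Y)"
      have Xe: "X = qmul g (0, x)" using tangent_decomp[OF gg X] x_def by simp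
      have Ye: "Y = qmul g (0, y)" using tangent_decomp[OF gg Y] y_def by simp
      have "A g X \<bullet> Y = Yg g x \<bullet> y" unfolding A_def x_def[symmetric] Ye q_inner_left gg by (simp add: inner_prod_def)
      moreover have "X \<bullet> A g Y = x \<bullet> Yg g y" unfolding A_def y_def[symmetric] Xe q_inner_left gg by (simp add: inner_prod_def)
      ultimately show ?thesis using sym by simp
    qed
  qed
qed

lemma zero_case:
  assumes H: "\<forall>g\<in>S3. vt V g \<noteq> 0 \<longrightarrow> Qfun V al g = 0" and g0: "g0 \<in> S3" and v0: "vt V g0 = 0"
  shows "Qfun V al g0 = 0"
proof (cases "g0 \<in> closure {g\<in>S3. vt V g \<noteq> 0}")
  case True
  have cl: "closed {g\<in>S3. Qfun V al g = 0}"
    by (rule continuous_closed_preimage_constant)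
       (use continuous_on_subset[OF cont_Qfun[OF sV sA]] in auto, simp add: S3_def)
  have "{g\<in>S3. vt V g \<noteq> 0} \<subseteq> {g\<in>S3. Qfun V al g = 0}" using H by blast
  then have "closure {g\<in>S3. vt V g \<noteq> 0} \<subseteq> {g\<in>S3. Qfun V al g = 0}" using closure_minimal cl by blast
  then show ?thesis using True by blast
next
  case False
  then obtain e where e: "e > 0" and ne: "\<forall>y\<in>{g\<in>S3. vt V g \<noteq> 0}. \<not> dist y g0 < e"
    unfolding closure_approachable by blast
  have gg: "g0 \<bullet> g0 = 1" using g0 S3_iff by blast
  have Vz: "\<forall>y\<in>S3. dist y g0 < e \<longrightarrow> V y = V g0"
  proof (intro ballI impI)
    fix y assume y: "y \<in> S3" "dist y g0 < e"
    then have "vt V y = 0" using ne by blast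
    then have "V y = 0" using VgE[OF y(1)] by (simp add: qmul_zero_right flip: zero_prod_def)
    moreover have "V g0 = 0" using VgE[OF g0] v0 by (simp add: qmul_zero_right flip: zero_prod_def)
    ultimately show "V y = V g0" by simp
  qed
  have m0: "mt V a g0 = 0" for a
  proof -
    have "frechet_derivative V (at g0) (Efr a g0) = 0"
      by (rule deriv_tangent_zero[OF g0 Efr_tan[OF gg] dV e Vz])
    then show ?thesis by (simp add: mt_def dderiv_def qmul_zero_right)
  qed
  show ?thesis unfolding Qfun_def m0 v0 by (simp add: Qv_def cvec_def trM_def mapM_def vec_eq_iff forall_3)
qed

end


theorem proposition5p1:
  fixes V :: "quat \<Rightarrow> quat" and \<alpha> :: "quat \<Rightarrow> real"
  assumes "smooth_fun V" and "smooth_fun \<alpha>"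
    and "\<forall>g\<in>S3. tangent g (V g)"
  defines "\<Psi> \<equiv> (\<lambda>g. cliff g (V g) (Phi g) + \<alpha> g *\<^sub>R Phi g)"
  shows "(gen_killing \<Psi> \<and> (\<forall>g\<in>S3. norm (\<Psi> g) = 1)) \<longleftrightarrow>
    ((\<forall>g\<in>S3. (\<alpha> g)\<^sup>2 + (norm (V g))\<^sup>2 = 1)
   \<and> (\<forall>g\<in>S3. - interior2 g (V g) (hodge1 g (lc_nabla V g (V g)))
               - vderiv V \<alpha> g *\<^sub>R V g + \<alpha> g *\<^sub>R lc_nabla V g (V g) + dfun \<alpha> g = 0)
   \<and> (\<forall>g\<in>S3. \<alpha> g * hodge3 g (wedge12 (V g) (dvf V g))
               + (2 * \<alpha> g - codiff V g) * (1 - (\<alpha> g)\<^sup>2) + \<alpha> g * vderiv V \<alpha> g = 0))"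
proof -
  note sV = assms(1) and sA = assms(2) and tan = assms(3)
  have dV: "\<And>x. V differentiable (at x)" by (rule smooth_diff[OF sV])
  have dA: "\<And>x. \<alpha> differentiable (at x)" by (rule smooth_diff[OF sA])
  define m0 where "m0 g = mt V 0 g" for g
  define m1 where "m1 g = mt V 1 g" for g
  define m2 where "m2 g = mt V 2 g" for g
  define E2 where "E2 g = - cross3 (mapM (m0 g) (m1 g) (m2 g) (vt V g)) (vt V g)
        - (wt \<alpha> g \<bullet> vt V g) *\<^sub>R vt V g + \<alpha> g *\<^sub>R mapM (m0 g) (m1 g) (m2 g) (vt V g) + wt \<alpha> g" for g
  define E3 where "E3 g = \<alpha> g * (vt V g$1 * (m1 g$3 - m2 g$2) - vt V g$2 * (m0 g$3 - m2 g$1) + vt V g$3 * (m0 g$2 - m1 g$1))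
   + (2 * \<alpha> g + trM (m0 g) (m1 g) (m2 g)) * (1 - (\<alpha> g)^2) + \<alpha> g * (wt \<alpha> g \<bullet> vt V g)" for g
  have normiff: "norm (\<Psi> g) = 1 \<longleftrightarrow> (\<alpha> g)\<^sup>2 + (norm (V g))\<^sup>2 = 1" if g: "g \<in> S3" for g
  proof -
    have "\<Psi> g = (\<alpha> g, vt V g)" unfolding \<Psi>_def using Psi_eq[OF tan dV dA g] by simp
    then have "norm (\<Psi> g) = sqrt ((\<alpha> g)\<^sup>2 + (norm (V g))\<^sup>2)"
      using norm_eq[OF tan dV dA g] by (simp add: norm_Pair power2_norm_eq_inner)
    then show ?thesis by simp
  qed
  have iiff: "(- interior2 g (V g) (hodge1 g (lc_nabla V g (V g)))
               - vderiv V \<alpha> g *\<^sub>R V g + \<alpha> g *\<^sub>R lc_nabla V g (V g) + dfun \<alpha> g = 0) \<longleftrightarrow> E2 g = 0"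
    if g: "g \<in> S3" for g
  proof -
    have gg: "g \<bullet> g = 1" using g S3_iff by blast
    show ?thesis unfolding ii_eq[OF tan dV dA g] qmul_left_eq0[OF gg] E2_def m0_def m1_def m2_def
      by (simp add: prod_eq_iff)
  qed
  have iiiff: "(\<alpha> g * hodge3 g (wedge12 (V g) (dvf V g))
               + (2 * \<alpha> g - codiff V g) * (1 - (\<alpha> g)\<^sup>2) + \<alpha> g * vderiv V \<alpha> g = 0) \<longleftrightarrow> E3 g = 0"
    if g: "g \<in> S3" for g
    unfolding iii_eq[OF tan dV dA g] E3_def m0_def m1_def m2_def ..
  show ?thesis
  proof
    assume L: "gen_killing \<Psi> \<and> (\<forall>g\<in>S3. norm (\<Psi> g) = 1)"
    have n1: "\<forall>g\<in>S3. (\<alpha> g)\<^sup>2 + (norm (V g))\<^sup>2 = 1" using L normiff by blast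
    have Q: "Qfun V \<alpha> g = 0" if g: "g \<in> S3" for g
      using kill_fwd[OF tan sV sA _ n1 g] L unfolding \<Psi>_def by blast
    have EE: "E2 g = 0 \<and> E3 g = 0" if g: "g \<in> S3" for g
    proof -
      have a1: "(\<alpha> g)\<^sup>2 + vt V g \<bullet> vt V g = 1"
        using n1 g norm_eq[OF tan dV dA g] by (metis)
      show ?thesis
        using core_fwd[OF a1 C2[OF tan dV dA n1 g] Q[OF g, unfolded Qfun_def]]
        unfolding E2_def E3_def m0_def m1_def m2_def by blast
    qed
    show "(\<forall>g\<in>S3. (\<alpha> g)\<^sup>2 + (norm (V g))\<^sup>2 = 1)
   \<and> (\<forall>g\<in>S3. - interior2 g (V g) (hodge1 g (lc_nabla V g (V g)))
               - vderiv V \<alpha> g *\<^sub>R V g + \<alpha> g *\<^sub>R lc_nabla V g (V g) + dfun \<alpha> g = 0)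
   \<and> (\<forall>g\<in>S3. \<alpha> g * hodge3 g (wedge12 (V g) (dvf V g))
               + (2 * \<alpha> g - codiff V g) * (1 - (\<alpha> g)\<^sup>2) + \<alpha> g * vderiv V \<alpha> g = 0)"
      using n1 EE iiff iiiff by blast
  next
    assume R: "(\<forall>g\<in>S3. (\<alpha> g)\<^sup>2 + (norm (V g))\<^sup>2 = 1)
   \<and> (\<forall>g\<in>S3. - interior2 g (V g) (hodge1 g (lc_nabla V g (V g)))
               - vderiv V \<alpha> g *\<^sub>R V g + \<alpha> g *\<^sub>R lc_nabla V g (V g) + dfun \<alpha> g = 0)
   \<and> (\<forall>g\<in>S3. \<alpha> g * hodge3 g (wedge12 (V g) (dvf V g))
               + (2 * \<alpha> g - codiff V g) * (1 - (\<alpha> g)\<^sup>2) + \<alpha> g * vderiv V \<alpha> g = 0)"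
    have n1: "\<forall>g\<in>S3. (\<alpha> g)\<^sup>2 + (norm (V g))\<^sup>2 = 1" using R by blast
    have E2z: "E2 g = 0" if "g \<in> S3" for g using R iiff that by blast
    have E3z: "E3 g = 0" if "g \<in> S3" for g using R iiiff that by blast
    have Qnz: "\<forall>g\<in>S3. vt V g \<noteq> 0 \<longrightarrow> Qfun V \<alpha> g = 0"
    proof (intro ballI impI)
      fix g assume g: "g \<in> S3" and v: "vt V g \<noteq> 0"
      have a1: "(\<alpha> g)\<^sup>2 + vt V g \<bullet> vt V g = 1"
        using n1 g norm_eq[OF tan dV dA g] by (metis)
      show "Qfun V \<alpha> g = 0" unfolding Qfun_def
        by (rule core_bwd[OF a1 C2[OF tan dV dA n1 g] v E2z[OF g, unfolded E2_def m0_def m1_def m2_def]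
              E3z[OF g, unfolded E3_def m0_def m1_def m2_def]])
    qed
    have Qall: "\<forall>g\<in>S3. Qfun V \<alpha> g = 0"
    proof
      fix g assume g: "g \<in> S3"
      show "Qfun V \<alpha> g = 0"
      proof (cases "vt V g = 0")
        case True then show ?thesis using zero_case[OF tan sV sA Qnz g] by blast
      next
        case False then show ?thesis using Qnz g by blast
      qed
    qed
    have "gen_killing \<Psi>" unfolding \<Psi>_def by (rule kill_bwd[OF tan sV sA n1 Qall])
    moreover have "\<forall>g\<in>S3. norm (\<Psi> g) = 1" using n1 normiff by blast
    ultimately show "gen_killing \<Psi> \<and> (\<forall>g\<in>S3. norm (\<Psi> g) = 1)" by blast
  qed
qed



end
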